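(* Let $F$ be a forest, let $T_1,\ldots,T_\ell$ be trees of $F$ (subgraphs of $F$ that are trees), and let $H$ be the graph with vertex set $\{1,\ldots,\ell\}$ in which distinct $i,j$ are adjacent if and only if $T_i,T_j$ are not anticomplete. If $H$ is bipartite then $H$ is a forest.
   Context: Two subgraphs of a graph are anticomplete if their vertex sets are disjoint and no edge of the graph joins a vertex of one to a vertex of the other. *)

theory Defs
  imports Main
begin

definition sgraph :: "'a set \<Rightarrow> ('a \<Rightarrow> 'a \<Rightarrow> bool) \<Rightarrow> bool" where
  "sgraph V E \<longleftrightarrow> (\<forall>x y. E x y \<longrightarrow> x \<in> V \<and> y \<in> V \<and> x \<noteq> y \<and> E y x)"

definition is_cycle :: "'a set \<Rightarrow> ('a \<Rightarrow> 'a \<Rightarrow> bool) \<Rightarrow> 'a list \<Rightarrow> bool" where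
  "is_cycle V E cs \<longleftrightarrow> length cs \<ge> 3 \<and> distinct cs \<and> set cs \<subseteq> V \<and>
     (\<forall>i < length cs. E (cs ! i) (cs ! ((i + 1) mod length cs)))"

definition acyclic_graph :: "'a set \<Rightarrow> ('a \<Rightarrow> 'a \<Rightarrow> bool) \<Rightarrow> bool" where
  "acyclic_graph V E \<longleftrightarrow> \<not> (\<exists>cs. is_cycle V E cs)"

definition connected_graph :: "'a set \<Rightarrow> ('a \<Rightarrow> 'a \<Rightarrow> bool) \<Rightarrow> bool" where
  "connected_graph V E \<longleftrightarrow> V \<noteq> {} \<and>
     (\<forall>x\<in>V. \<forall>y\<in>V. (\<lambda>u v. E u v \<and> u \<in> V \<and> v \<in> V)\<^sup>*\<^sup>* x y)"

definition forest :: "'a set \<Rightarrow> ('a \<Rightarrow> 'a \<Rightarrow> bool) \<Rightarrow> bool" where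
  "forest V E \<longleftrightarrow> sgraph V E \<and> acyclic_graph V E"

definition tree :: "'a set \<Rightarrow> ('a \<Rightarrow> 'a \<Rightarrow> bool) \<Rightarrow> bool" where
  "tree V E \<longleftrightarrow> forest V E \<and> connected_graph V E"

definition subgraph :: "'a set \<Rightarrow> ('a \<Rightarrow> 'a \<Rightarrow> bool) \<Rightarrow> 'a set \<Rightarrow> ('a \<Rightarrow> 'a \<Rightarrow> bool) \<Rightarrow> bool" where
  "subgraph V' E' V E \<longleftrightarrow> V' \<subseteq> V \<and> (\<forall>x y. E' x y \<longrightarrow> E x y)"

definition anticomplete :: "('a \<Rightarrow> 'a \<Rightarrow> bool) \<Rightarrow> 'a set \<Rightarrow> 'a set \<Rightarrow> bool" where
  "anticomplete E A B \<longleftrightarrow> A \<inter> B = {} \<and> (\<forall>a\<in>A. \<forall>b\<in>B. \<not> E a b)"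

definition bipartite :: "'a set \<Rightarrow> ('a \<Rightarrow> 'a \<Rightarrow> bool) \<Rightarrow> bool" where
  "bipartite V E \<longleftrightarrow> (\<exists>A B. A \<inter> B = {} \<and> A \<union> B = V \<and>
     (\<forall>x y. E x y \<longrightarrow> (x \<in> A \<and> y \<in> B) \<or> (x \<in> B \<and> y \<in> A)))"

definition touch_graph :: "('a \<Rightarrow> 'a \<Rightarrow> bool) \<Rightarrow> nat \<Rightarrow> (nat \<Rightarrow> 'a set) \<Rightarrow> nat \<Rightarrow> nat \<Rightarrow> bool" where
  "touch_graph E l TV i j \<longleftrightarrow> i \<in> {1..l} \<and> j \<in> {1..l} \<and> i \<noteq> j \<and>
     \<not> anticomplete E (TV i) (TV j)"

end

theory Submission
  imports Defs "HOL-Library.Transitive_Closure_Table"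
begin

definition rconn :: "('a \<Rightarrow> 'a \<Rightarrow> bool) \<Rightarrow> 'a set \<Rightarrow> 'a \<Rightarrow> 'a \<Rightarrow> bool" where
  "rconn E S x y \<longleftrightarrow> (\<lambda>u v. E u v \<and> u \<in> S \<and> v \<in> S)\<^sup>*\<^sup>* x y"

definition cset :: "('a \<Rightarrow> 'a \<Rightarrow> bool) \<Rightarrow> 'a set \<Rightarrow> bool" where
  "cset E S \<longleftrightarrow> (\<forall>x\<in>S. \<forall>y\<in>S. rconn E S x y)"

lemma path_nth: "rtrancl_path r x xs y \<Longrightarrow> i < length xs \<Longrightarrow> r ((x#xs)!i) (xs!i)"
proof (induction arbitrary: i rule: rtrancl_path.induct)
  case (base x) then show ?case by simp
next
  case (step x y ys z) then show ?case by (cases i) auto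
qed

lemma path_last: "rtrancl_path r x xs y \<Longrightarrow> xs \<noteq> [] \<Longrightarrow> last xs = y"
proof (induction rule: rtrancl_path.induct)
  case (base x) then show ?case by simp
next
  case (step x y ys z) then show ?case by (cases ys) (auto elim: rtrancl_path.cases)
qed

lemma path_nil: "rtrancl_path r x [] y \<Longrightarrow> x = y"
  by (auto elim: rtrancl_path.cases)

lemma edge_cut:
  assumes sg: "sgraph V E" and ac: "acyclic_graph V E" and e: "E u v"
    and w: "(\<lambda>s t. E s t \<and> \<not>(s = u \<and> t = v) \<and> \<not>(s = v \<and> t = u))\<^sup>*\<^sup>* v u"
  shows False
proof -
  let ?R = "\<lambda>s t. E s t \<and> \<not>(s = u \<and> t = v) \<and> \<not>(s = v \<and> t = u)"
  obtain ys where "rtrancl_path ?R v ys u" using w by (auto simp: rtranclp_eq_rtrancl_path)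
  then obtain xs where p: "rtrancl_path ?R v xs u" and d: "distinct (v # xs)"
    by (rule rtrancl_path_distinct)
  have uv: "u \<noteq> v" "u \<in> V" "v \<in> V" using sg e unfolding sgraph_def by auto
  have ne: "xs \<noteq> []" using p uv path_nil by fastforce
  have l: "last xs = u" using path_last[OF p ne] .
  have "length xs \<noteq> 1"
  proof
    assume "length xs = 1"
    then obtain a where "xs = [a]" by (cases xs) auto
    then have "?R v u" using path_nth[OF p, of 0] l by simp
    then show False by simp
  qed
  with ne have len: "length xs \<ge> 2" by (cases xs) (auto simp: Suc_le_eq)
  let ?cs = "v # xs"
  have cyc: "is_cycle V E ?cs"
    unfolding is_cycle_def
  proof (intro conjI allI impI)
    show "3 \<le> length ?cs" using len by simp
    show "distinct ?cs" by fact
    show "set ?cs \<subseteq> V"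
    proof
      fix z assume "z \<in> set ?cs"
      then obtain i where i: "i < length ?cs" "?cs ! i = z" by (metis in_set_conv_nth)
      show "z \<in> V"
      proof (cases "i < length xs")
        case True then show ?thesis using path_nth[OF p True] sg i unfolding sgraph_def by auto
      next
        case False
        then have "i = length xs" using i by simp
        then have "z = u" using i l ne by (simp add: last_conv_nth)
        then show ?thesis using uv by simp
      qed
    qed
    fix i assume i: "i < length ?cs"
    show "E (?cs ! i) (?cs ! ((i + 1) mod length ?cs))"
    proof (cases "i < length xs")
      case True
      then have "(i+1) mod length ?cs = i + 1" by simp
      then show ?thesis using path_nth[OF p True] by simp
    next
      case False
      then have "i = length xs" using i by simp
      then show ?thesis using l ne e by (simp add: last_conv_nth)
    qed
  qed
  then show False using ac unfolding acyclic_graph_def by blast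
qed


lemma rconn_refl: "rconn E S x x" by (simp add: rconn_def)

lemma rconn_mono_gen:
  assumes "(\<lambda>u v. E u v \<and> u \<in> S \<and> v \<in> S)\<^sup>*\<^sup>* x y"
    and "\<And>u v. E u v \<Longrightarrow> u \<in> S \<Longrightarrow> v \<in> S \<Longrightarrow> R u v"
  shows "R\<^sup>*\<^sup>* x y"
  using assms(1)
proof (induction rule: rtranclp_induct)
  case base then show ?case by simp
next
  case (step y z) then show ?case using assms(2) by (meson rtranclp.rtrancl_into_rtrancl)
qed

lemma rconn_mono: "rconn E S x y \<Longrightarrow> S \<subseteq> T \<Longrightarrow> rconn E T x y"
  unfolding rconn_def by (erule rconn_mono_gen) auto

lemma rconn_trans: "rconn E S x y \<Longrightarrow> rconn E S y z \<Longrightarrow> rconn E S x z"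
  unfolding rconn_def by auto

lemma rconn_step: "E x y \<Longrightarrow> x \<in> S \<Longrightarrow> y \<in> S \<Longrightarrow> rconn E S x y"
  unfolding rconn_def by auto

lemma rconn_sym:
  assumes sg: "sgraph V E" and r: "rconn E S x y" shows "rconn E S y x"
  using r unfolding rconn_def
proof (induction rule: rtranclp_induct)
  case base then show ?case by simp
next
  case (step y z)
  then have "E z y" using sg unfolding sgraph_def by auto
  then have "(\<lambda>u v. E u v \<and> u \<in> S \<and> v \<in> S) z y" using step by simp
  then show ?case using step(3) by (rule converse_rtranclp_into_rtranclp)
qed

lemma rconn_mem: "rconn E S x y \<Longrightarrow> x \<noteq> y \<Longrightarrow> x \<in> S \<and> y \<in> S"
  unfolding rconn_def by (induction rule: rtranclp_induct) auto

lemma exit_lemma: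
  assumes "(\<lambda>s t. E s t \<and> s \<in> S \<and> t \<in> S)\<^sup>*\<^sup>* a b" and "a \<in> K" and "b \<notin> K"
  shows "\<exists>u v. u \<in> K \<and> v \<notin> K \<and> E u v \<and> v \<in> S \<and>
     (\<lambda>s t. E s t \<and> \<not>(s = u \<and> t = v) \<and> \<not>(s = v \<and> t = u))\<^sup>*\<^sup>* v b"
  using assms
proof (induction rule: rtranclp_induct)
  case base then show ?case by simp
next
  case (step z w)
  show ?case
  proof (cases "z \<in> K")
    case True then show ?thesis using step by blast
  next
    case False
    then obtain u v where uv: "u \<in> K" "v \<notin> K" "E u v" "v \<in> S"
      "(\<lambda>s t. E s t \<and> \<not>(s = u \<and> t = v) \<and> \<not>(s = v \<and> t = u))\<^sup>*\<^sup>* v z"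
      using step by blast
    have "u \<noteq> z" "u \<noteq> w" using uv False step by auto
    then have "(\<lambda>s t. E s t \<and> \<not>(s = u \<and> t = v) \<and> \<not>(s = v \<and> t = u))\<^sup>*\<^sup>* v w"
      using uv(5) step(2) by (simp add: rtranclp.rtrancl_into_rtrancl)
    then show ?thesis using uv by blast
  qed
qed

lemma inter_conn:
  assumes sg: "sgraph V E" and ac: "acyclic_graph V E"
    and r1: "rconn E S1 x y" and r2: "rconn E S2 x y"
  shows "rconn E (S1 \<inter> S2) x y"
proof (rule ccontr)
  assume ny: "\<not> rconn E (S1 \<inter> S2) x y"
  then have xy: "x \<noteq> y" using rconn_refl by metis
  have x12: "x \<in> S1" "x \<in> S2" using rconn_mem[OF r1 xy] rconn_mem[OF r2 xy] by auto
  define K where "K = {z. rconn E (S1 \<inter> S2) x z}"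
  have "x \<in> K" by (simp add: K_def rconn_refl)
  moreover have "y \<notin> K" using ny K_def by simp
  ultimately obtain u v where uv: "u \<in> K" "v \<notin> K" "E u v" "v \<in> S1" and
    w1: "(\<lambda>s t. E s t \<and> \<not>(s = u \<and> t = v) \<and> \<not>(s = v \<and> t = u))\<^sup>*\<^sup>* v y"
    using exit_lemma[of E S1 x y K] r1 unfolding rconn_def by blast
  let ?R = "\<lambda>s t. E s t \<and> \<not>(s = u \<and> t = v) \<and> \<not>(s = v \<and> t = u)"
  have uS: "u \<in> S1 \<inter> S2"
    using uv(1) rconn_mem[of E "S1 \<inter> S2" x u] x12 unfolding K_def by (cases "x = u") auto
  have vS2: "v \<notin> S2"
  proof
    assume "v \<in> S2"
    then have "rconn E (S1 \<inter> S2) u v" using uS uv by (intro rconn_step) auto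
    then have "v \<in> K" using uv(1) unfolding K_def using rconn_trans by fastforce
    then show False using uv by simp
  qed
  have "rconn E S2 y x" using rconn_sym[OF sg r2] .
  then have w2: "?R\<^sup>*\<^sup>* y x" unfolding rconn_def
    by (rule rconn_mono_gen) (use vS2 in auto)
  have "rconn E (S1 \<inter> S2) x u" using uv(1) K_def by simp
  then have w3: "?R\<^sup>*\<^sup>* x u" unfolding rconn_def
    by (rule rconn_mono_gen) (use vS2 in auto)
  have "?R\<^sup>*\<^sup>* v u" using w1 w2 w3 by (meson rtranclp_trans)
  then show False using edge_cut[OF sg ac uv(3)] by blast
qed


lemma anti_sym: "sgraph V E \<Longrightarrow> anticomplete E X Y \<longleftrightarrow> anticomplete E Y X"
  unfolding anticomplete_def sgraph_def by blast

lemma nanti_mono: "\<not> anticomplete E X Y \<Longrightarrow> X \<subseteq> X' \<Longrightarrow> Y \<subseteq> Y' \<Longrightarrow> \<not> anticomplete E X' Y'"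
  unfolding anticomplete_def by blast

lemma cset_union:
  assumes sg: "sgraph V E" and cS: "cset E S" and cT: "cset E T" and na: "\<not> anticomplete E S T"
  shows "cset E (S \<union> T)"
proof -
  obtain a b where ab: "a \<in> S" "b \<in> T" "rconn E (S \<union> T) a b"
  proof (cases "S \<inter> T = {}")
    case True
    then obtain a b where "a \<in> S" "b \<in> T" "E a b" using na unfolding anticomplete_def by blast
    then show ?thesis using that[of a b] rconn_step[of E a b "S \<union> T"] by simp
  next
    case False
    then obtain a where "a \<in> S" "a \<in> T" by blast
    then show ?thesis using that[of a a] rconn_refl[of E "S \<union> T" a] by simp
  qed
  have hS: "rconn E (S \<union> T) x y" if "x \<in> S" "y \<in> S" for x y
    using cS that rconn_mono[of E S x y "S \<union> T"] unfolding cset_def by blast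
  have hT: "rconn E (S \<union> T) x y" if "x \<in> T" "y \<in> T" for x y
    using cT that rconn_mono[of E T x y "S \<union> T"] unfolding cset_def by blast
  have hST: "rconn E (S \<union> T) x y" if "x \<in> S" "y \<in> T" for x y
    using hS[OF that(1) ab(1)] ab(3) hT[OF ab(2) that(2)] rconn_trans by (meson rconn_trans)
  show ?thesis unfolding cset_def
  proof (intro ballI)
    fix x y assume "x \<in> S \<union> T" "y \<in> S \<union> T"
    then consider "x \<in> S" "y \<in> S" | "x \<in> S" "y \<in> T" | "x \<in> T" "y \<in> S" | "x \<in> T" "y \<in> T"
      by blast
    then show "rconn E (S \<union> T) x y"
    proof cases
      case 1 then show ?thesis by (rule hS)
    next
      case 2 then show ?thesis by (rule hST)
    next
      case 3 then show ?thesis using hST[of y x] rconn_sym[OF sg] by blast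
    next
      case 4 then show ?thesis by (rule hT)
    qed
  qed
qed

lemma anti_walk:
  assumes "anticomplete E A B" "rconn E (A \<union> B) a b" "a \<in> A" shows "b \<in> A"
  using assms(2,3) unfolding rconn_def
proof (induction rule: rtranclp_induct)
  case base then show ?case by simp
next
  case (step y z) then show ?case using assms(1) unfolding anticomplete_def by blast
qed

lemma chord1:
  assumes c: "is_cycle V H cs" and j: "2 \<le> j" "j + 2 \<le> length cs" and h: "H (cs!0) (cs!j)"
  shows "is_cycle V H (cs!0 # drop j cs)"
proof -
  let ?k = "length cs"
  let ?d = "cs!0 # drop j cs"
  have k: "?k \<ge> 3" "distinct cs" "set cs \<subseteq> V"
    and adj: "\<And>i. i < ?k \<Longrightarrow> H (cs ! i) (cs ! ((i + 1) mod ?k))"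
    using c unfolding is_cycle_def by auto
  have ld: "length ?d = ?k - j + 1" using j by simp
  show ?thesis unfolding is_cycle_def
  proof (intro conjI allI impI)
    show "3 \<le> length ?d" using j by simp
    show "distinct ?d"
    proof -
      have "cs!0 \<notin> set (drop j cs)"
      proof
        assume "cs!0 \<in> set (drop j cs)"
        then obtain t where t: "t < ?k - j" "drop j cs ! t = cs!0" by (auto simp: in_set_conv_nth)
        then have "cs ! (j + t) = cs ! 0" using j by simp
        moreover have "j + t < ?k" "0 < ?k" using t j by auto
        ultimately have "j + t = 0" using k(2) nth_eq_iff_index_eq by blast
        then show False using j by simp
      qed
      then show ?thesis using k(2) by simp
    qed
    have "cs ! 0 \<in> set cs" using k(1) by (intro nth_mem) auto
    then show "set ?d \<subseteq> V" using k j by (auto dest: in_set_dropD)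
    fix i assume i: "i < length ?d"
    show "H (?d ! i) (?d ! ((i + 1) mod length ?d))"
    proof (cases "i = 0")
      case True then show ?thesis using h j ld by simp
    next
      case False
      then obtain t where t: "i = Suc t" by (cases i) auto
      show ?thesis
      proof (cases "i + 1 < length ?d")
        case True
        then have "(i + 1) mod length ?d = i + 1" by simp
        moreover have "?d ! i = cs ! (j + t)" using t i j by simp
        moreover have "?d ! (i+1) = cs ! (j + t + 1)" using t True j by simp
        moreover have "(j + t + 1) mod ?k = j + t + 1" using True ld j t by simp
        ultimately show ?thesis using adj[of "j + t"] True ld t j by simp
      next
        case False
        then have "i + 1 = length ?d" using i by simp
        then have "(i + 1) mod length ?d = 0" by simp
        moreover have "?d ! i = cs ! (?k - 1)" using t i j \<open>i + 1 = length ?d\<close> by simp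
        moreover have "((?k - 1) + 1) mod ?k = 0" using k(1) by (metis Suc_diff_1 Suc_eq_plus1 mod_self not_numeral_le_zero gr0I list.size(3))
        ultimately show ?thesis using adj[of "?k - 1"] k by simp
      qed
    qed
  qed
qed

lemma chord2:
  assumes c: "is_cycle V H cs" and k4: "length cs \<ge> 4" and h: "H (cs!(length cs - 1)) (cs!1)"
  shows "is_cycle V H (tl cs)"
proof -
  let ?k = "length cs"
  have k: "?k \<ge> 3" "distinct cs" "set cs \<subseteq> V"
    and adj: "\<And>i. i < ?k \<Longrightarrow> H (cs ! i) (cs ! ((i + 1) mod ?k))"
    using c unfolding is_cycle_def by auto
  show ?thesis unfolding is_cycle_def
  proof (intro conjI allI impI)
    show "3 \<le> length (tl cs)" using k4 by simp
    show "distinct (tl cs)" using k by (simp add: distinct_tl)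
    show "set (tl cs) \<subseteq> V" using k by (cases cs) auto
    fix i assume i: "i < length (tl cs)"
    show "H (tl cs ! i) (tl cs ! ((i + 1) mod length (tl cs)))"
    proof (cases "i + 1 < length (tl cs)")
      case True
      then have "(i + 1 + 1) mod ?k = i + 2" by simp
      then show ?thesis using adj[of "i+1"] True by (simp add: nth_tl)
    next
      case False
      then have ii: "i = ?k - 2" using i by simp
      obtain m where m: "?k = Suc m" "m \<ge> 3" using k4 by (cases ?k) auto
      have "Suc (Suc (?k - 2)) mod (?k - Suc 0) = 1" using m
        by (simp add: Suc_diff_Suc numeral_2_eq_2 mod_Suc)
      moreover have "Suc (?k - 2) = ?k - 1" using k4 by simp
      ultimately show ?thesis using h k4 ii by (simp add: nth_tl)
    qed
  qed
qed


theorem mainTheorem5: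
  fixes V :: "'a set" and E :: "'a \<Rightarrow> 'a \<Rightarrow> bool"
    and l :: nat and TV :: "nat \<Rightarrow> 'a set" and TE :: "nat \<Rightarrow> 'a \<Rightarrow> 'a \<Rightarrow> bool"
  assumes "finite V"
    and "forest V E"
    and "\<forall>i\<in>{1..l}. subgraph (TV i) (TE i) V E \<and> tree (TV i) (TE i)"
    and "bipartite {1..l} (touch_graph E l TV)"
  shows "forest {1..l} (touch_graph E l TV)"
proof -
  let ?H = "touch_graph E l TV"
  have sg: "sgraph V E" and ac: "acyclic_graph V E" using assms(2) unfolding forest_def by auto
  have sgH: "sgraph {1..l} ?H"
    unfolding sgraph_def touch_graph_def using anti_sym[OF sg] by blast
  have treei: "cset E (TV i) \<and> TV i \<noteq> {}" if "i \<in> {1..l}" for i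
  proof -
    have sub: "\<And>x y. TE i x y \<Longrightarrow> E x y" and tr: "tree (TV i) (TE i)"
      using assms(3) that unfolding subgraph_def by auto
    then have cg: "connected_graph (TV i) (TE i)" unfolding tree_def by simp
    have "cset E (TV i)" unfolding cset_def rconn_def
    proof (intro ballI)
      fix x y assume "x \<in> TV i" "y \<in> TV i"
      then have "(\<lambda>u v. TE i u v \<and> u \<in> TV i \<and> v \<in> TV i)\<^sup>*\<^sup>* x y"
        using cg unfolding connected_graph_def by blast
      then show "(\<lambda>u v. E u v \<and> u \<in> TV i \<and> v \<in> TV i)\<^sup>*\<^sup>* x y"
        by (rule rconn_mono_gen) (use sub in auto)
    qed
    then show ?thesis using cg unfolding connected_graph_def by simp
  qed
  have "acyclic_graph {1..l} ?H"
    unfolding acyclic_graph_def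
  proof
    assume "\<exists>cs. is_cycle {1..l} ?H cs"
    then obtain cs0 where "is_cycle {1..l} ?H cs0" by blast
    then obtain cs where c: "is_cycle {1..l} ?H cs"
      and minc: "\<And>d. is_cycle {1..l} ?H d \<Longrightarrow> length cs \<le> length d"
      using ex_has_least_nat[of "is_cycle {1..l} ?H" cs0 length] by blast
    define k where "k = length cs"
    have k3: "k \<ge> 3" and dist: "distinct cs" and rng: "set cs \<subseteq> {1..l}"
      and adj: "\<And>i. i < k \<Longrightarrow> ?H (cs ! i) (cs ! ((i + 1) mod k))"
      using c unfolding is_cycle_def k_def by auto
    have inr: "cs ! i \<in> {1..l}" if "i < k" for i using rng that k_def nth_mem by blast
    have adj1: "?H (cs ! i) (cs ! (i + 1))" if "i + 1 < k" for i
      using adj[of i] that by simp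
    have adjl: "?H (cs ! (k - 1)) (cs ! 0)"
      using adj[of "k - 1"] k3 by (metis Suc_diff_1 Suc_eq_plus1 mod_self not_numeral_le_zero gr0I diff_less zero_less_one)
    show False
    proof (cases "k = 3")
      case True
      obtain A B where AB: "A \<inter> B = {}" "A \<union> B = {1..l}"
        "\<And>x y. ?H x y \<Longrightarrow> (x \<in> A \<and> y \<in> B) \<or> (x \<in> B \<and> y \<in> A)"
        using assms(4) unfolding bipartite_def by blast
      have h01: "?H (cs!0) (cs!1)" and h12: "?H (cs!1) (cs!2)" and h20: "?H (cs!2) (cs!0)"
        using adj1[of 0] adj1[of 1] adjl True by (auto simp: numeral_2_eq_2)
      show False using AB(1) AB(3)[OF h01] AB(3)[OF h12] AB(3)[OF h20] by blast
    next
      case False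
      then have k4: "k \<ge> 4" using k3 by simp
      have nch1: "\<not> ?H (cs!0) (cs!j)" if "2 \<le> j" "j + 2 \<le> k" for j
      proof
        assume "?H (cs!0) (cs!j)"
        then have "is_cycle {1..l} ?H (cs!0 # drop j cs)" using chord1[OF c] that k_def by simp
        then have "length cs \<le> length (cs!0 # drop j cs)" by (rule minc)
        then show False using that k_def by simp
      qed
      have nch2: "\<not> ?H (cs!(k-1)) (cs!1)"
      proof
        assume "?H (cs!(k-1)) (cs!1)"
        then have "is_cycle {1..l} ?H (tl cs)" using chord2[OF c] k4 k_def by simp
        then have "length cs \<le> length (tl cs)" by (rule minc)
        then show False using k4 k_def by simp
      qed
      have anti: "anticomplete E (TV (cs!i)) (TV (cs!j))" 
        if "i < k" "j < k" "i \<noteq> j" "\<not> ?H (cs!i) (cs!j)" for i j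
      proof -
        have "cs!i \<noteq> cs!j" using dist that k_def nth_eq_iff_index_eq by blast
        then show ?thesis using that inr unfolding touch_graph_def by blast
      qed
      have nanti: "\<not> anticomplete E (TV x) (TV y)" if "?H x y" for x y
        using that unfolding touch_graph_def by blast
      define B where "B m = (\<Union>j\<in>{2..m}. TV (cs!j))" for m
      have cB: "cset E (B m)" if "2 \<le> m" "m + 2 \<le> k" for m
        using that
      proof (induction m)
        case 0 then show ?case by simp
      next
        case (Suc m)
        show ?case
        proof (cases "m < 2")
          case True
          then have "Suc m = 2" using Suc by simp
          then have "B (Suc m) = TV (cs!2)" unfolding B_def by (simp add: numeral_2_eq_2)
          then show ?thesis using treei inr k4 by simp
        next
          case False
          then have eq: "B (Suc m) = B m \<union> TV (cs ! Suc m)" unfolding B_def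
            by (auto simp: atLeastAtMostSuc_conv)
          have "cset E (B m)" using Suc False by simp
          moreover have "cset E (TV (cs ! Suc m))" using treei inr Suc by simp
          moreover have "\<not> anticomplete E (B m) (TV (cs ! Suc m))"
          proof -
            have "\<not> anticomplete E (TV (cs!m)) (TV (cs ! Suc m))" using nanti adj1[of m] Suc by simp
            moreover have "m \<in> {2..m}" using False by simp
            then have "TV (cs!m) \<subseteq> B m" unfolding B_def by blast
            ultimately show ?thesis using nanti_mono by blast
          qed
          ultimately show ?thesis using cset_union[OF sg] eq by simp
        qed
      qed
      define A where "A = TV (cs!0)"
      define P where "P = TV (cs!1)"
      define Q where "Q = TV (cs!(k-1))"
      define BB where "BB = B (k-2)"
      have cA: "cset E A" "A \<noteq> {}" using treei inr k4 A_def by auto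
      have cP: "cset E P" using treei inr k4 P_def by auto
      have cQ: "cset E Q" using treei inr k4 Q_def by auto
      have cBB: "cset E BB" using cB k4 BB_def by simp
      have "2 \<in> {2..k-2}" "k-2 \<in> {2..k-2}" using k4 by auto
      then have T2: "TV (cs!2) \<subseteq> BB" "TV (cs!(k-2)) \<subseteq> BB" unfolding BB_def B_def by blast+
      have BBne: "BB \<noteq> {}" using T2 treei inr k4 by fastforce
      have aAB: "anticomplete E A BB"
        unfolding anticomplete_def
      proof (intro conjI ballI)
        have "\<And>j. j \<in> {2..k-2} \<Longrightarrow> anticomplete E A (TV (cs!j))"
          unfolding A_def using anti nch1 k4 by auto
        then show "A \<inter> BB = {}" "\<And>a b. a \<in> A \<Longrightarrow> b \<in> BB \<Longrightarrow> \<not> E a b"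
          unfolding BB_def B_def anticomplete_def by blast+
      qed
      have "anticomplete E Q P"
        using anti[of "k-1" 1] nch2 k4 unfolding P_def Q_def by simp
      then have aPQ: "anticomplete E P Q" using anti_sym[OF sg] by blast
      have "cset E (A \<union> P)"
        using cset_union[OF sg cA(1) cP] nanti[OF adj1[of 0]] k4 A_def P_def by simp
      moreover have "\<not> anticomplete E (A \<union> P) BB"
      proof -
        have h: "?H (cs!1) (cs!2)" using adj1[of 1] k4 by (simp add: numeral_2_eq_2)
        have "\<not> anticomplete E P (TV (cs!2))" using nanti[OF h] P_def by simp
        then show ?thesis using T2 nanti_mono[of E P "TV (cs!2)" "A \<union> P" BB] by blast
      qed
      ultimately have c1: "cset E (A \<union> P \<union> BB)" using cset_union[OF sg _ cBB] by simp
      have "\<not> anticomplete E Q A" using nanti[OF adjl] A_def Q_def by simp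
      then have "\<not> anticomplete E A Q" using anti_sym[OF sg] by blast
      then have "cset E (A \<union> Q)" using cset_union[OF sg cA(1) cQ] by simp
      moreover have "\<not> anticomplete E (A \<union> Q) BB"
      proof -
        have "\<not> anticomplete E (TV (cs!(k-2))) Q" using nanti[OF adj1[of "k-2"]] k4 Q_def
          by (simp add: Suc_diff_Suc numeral_2_eq_2)
        then have "\<not> anticomplete E Q (TV (cs!(k-2)))" using anti_sym[OF sg] by blast
        then show ?thesis using T2 nanti_mono[of E Q "TV (cs!(k-2))" "A \<union> Q" BB] by auto
      qed
      ultimately have c2: "cset E (A \<union> Q \<union> BB)" using cset_union[OF sg _ cBB] by simp
      obtain a b where ab: "a \<in> A" "b \<in> BB" using cA BBne by blast
      have r1: "rconn E (A \<union> P \<union> BB) a b" using c1 ab unfolding cset_def by blast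
      have r2: "rconn E (A \<union> Q \<union> BB) a b" using c2 ab unfolding cset_def by blast
      have "rconn E ((A \<union> P \<union> BB) \<inter> (A \<union> Q \<union> BB)) a b" by (rule inter_conn[OF sg ac r1 r2])
      moreover have "(A \<union> P \<union> BB) \<inter> (A \<union> Q \<union> BB) \<subseteq> A \<union> BB"
        using aPQ unfolding anticomplete_def by blast
      ultimately have "rconn E (A \<union> BB) a b" by (rule rconn_mono)
      then have "b \<in> A" using anti_walk[OF aAB] ab by blast
      then show False using aAB ab unfolding anticomplete_def by blast
    qed
  qed
  then show ?thesis using sgH unfolding forest_def by simp
qed

end
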